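(* Let $r\geq 2$ be a fixed integer. For each $n$, let $L=L_n$ be a simplicial complex with $n$ vertices and $p_1=p_1(n)\in[0,1]$. Let $G(L,p_1)$ be the random graph obtained by including each $1$-simplex of $L$ independently with probability $p_1$. If $\lim_{n\to\infty}p_1/n^{-2/(r+1)}=0$, then $\dim X_{G(L,p_1),L}\leq r$ asymptotically almost surely. If in addition $\lim_{n\to\infty}p_1/n^{-2/r}=\infty$ and $\mathrm{Sk}^r(L)=\mathrm{Sk}^r(\Delta_n)$, then $\dim X_{G(L,p_1),L}=r$ asymptotically almost surely.
   Context: $\Delta_n$ is the complete simplicial complex on the $n$ vertices (all nonempty subsets), and $L\subseteq\Delta_n$. $\mathrm{Sk}^r$ denotes the $r$-skeleton (simplices of dimension $\leq r$; dimension of a simplex is its cardinality minus one). For a graph $G$ on these vertices, $X_G$ is its clique complex (simplices are the sets of vertices pairwise joined by edges of $G$), and $X_{G,L}=X_G\cap L$. An event depending on $n$ holds asymptotically almost surely (a.a.s.) if its probability tends to $1$ as $n\to\infty$. *)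

theory Defs
  imports "HOL-Probability.Probability"
begin

definition Delta :: "nat \<Rightarrow> nat set set" where
  "Delta n = {\<sigma>. \<sigma> \<subseteq> {0..<n} \<and> \<sigma> \<noteq> {}}"

definition simplicial_complex_on :: "nat \<Rightarrow> nat set set \<Rightarrow> bool" where
  "simplicial_complex_on n L \<longleftrightarrow> L \<subseteq> Delta n \<and>
     (\<forall>\<sigma>\<in>L. \<forall>\<tau>. \<tau> \<subseteq> \<sigma> \<and> \<tau> \<noteq> {} \<longrightarrow> \<tau> \<in> L)"

text \<open>r-skeleton: simplices of dimension at most r, i.e. cardinality at most r+1.\<close>
definition Sk :: "nat \<Rightarrow> nat set set \<Rightarrow> nat set set" where
  "Sk r K = {\<sigma>\<in>K. card \<sigma> \<le> r + 1}"

definition cdim :: "nat set set \<Rightarrow> int" where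
  "cdim K = (if K = {} then -1 else int (Max (card ` K)) - 1)"

text \<open>A graph is given by its set of edges (2-element vertex sets).\<close>
definition clique_complex :: "nat \<Rightarrow> nat set set \<Rightarrow> nat set set" where
  "clique_complex n G = {\<sigma>\<in>Delta n. \<forall>u\<in>\<sigma>. \<forall>v\<in>\<sigma>. u \<noteq> v \<longrightarrow> {u, v} \<in> G}"

definition X_GL :: "nat \<Rightarrow> nat set set \<Rightarrow> nat set set \<Rightarrow> nat set set" where
  "X_GL n G L = clique_complex n G \<inter> L"

definition edges :: "nat set set \<Rightarrow> nat set set" where
  "edges L = {e\<in>L. card e = 2}"

definition random_graph :: "nat set set \<Rightarrow> real \<Rightarrow> nat set set pmf" where
  "random_graph L p =
     map_pmf (\<lambda>f. {e\<in>edges L. f e}) (Pi_pmf (edges L) False (\<lambda>_. bernoulli_pmf p))"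

definition aas :: "(nat \<Rightarrow> 'a pmf) \<Rightarrow> (nat \<Rightarrow> 'a \<Rightarrow> bool) \<Rightarrow> bool" where
  "aas M P \<longleftrightarrow> (\<lambda>n. measure_pmf.prob (M n) {x. P n x}) \<longlonglongrightarrow> 1"

end

theory Submission
  imports Defs
begin


lemma finite_Delta: "finite (Delta n)"
  unfolding Delta_def by (rule finite_subset[of _ "Pow {0..<n}"]) auto

lemma finite_edges: "L \<subseteq> Delta n \<Longrightarrow> finite (edges L)"
  unfolding edges_def using finite_Delta by (metis (no_types, lifting) finite_subset mem_Collect_eq subsetI subset_iff)

lemma rg_support: "set_pmf (random_graph L p) \<subseteq> Pow (edges L)"
  unfolding random_graph_def by auto

lemma rg_subset:
  assumes fin: "finite (edges L)" and T: "T \<subseteq> edges L" and p: "0 \<le> p" "p \<le> 1"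
  shows "measure_pmf.prob (random_graph L p) {G. T \<subseteq> G} = p ^ card T"
proof -
  define E where "E = edges L"
  define B where "B = (\<lambda>x. if x \<in> T then {True} else (UNIV::bool set))"
  have pre: "(\<lambda>f. {e\<in>edges L. f e}) -` {G. T \<subseteq> G} = Pi E B"
    using T unfolding B_def E_def Pi_def by auto
  have "measure_pmf.prob (random_graph L p) {G. T \<subseteq> G}
      = measure_pmf.prob (Pi_pmf E False (\<lambda>_. bernoulli_pmf p)) (Pi E B)"
    unfolding random_graph_def measure_map_pmf pre E_def by simp
  also have "\<dots> = (\<Prod>x\<in>E. measure_pmf.prob (bernoulli_pmf p) (B x))"
    using fin unfolding E_def by (rule measure_Pi_pmf_Pi)
  also have "\<dots> = (\<Prod>x\<in>E. if x \<in> T then p else 1)"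
    apply (rule prod.cong, simp)
    using p by (auto simp: B_def measure_pmf_single)
  also have "\<dots> = (\<Prod>x\<in>E \<inter> T. p)"
    by (rule prod.inter_restrict[symmetric]) (use fin in \<open>simp add: E_def\<close>)
  also have "\<dots> = p ^ card T"
    using T by (simp add: E_def Int_absorb1)
  finally show ?thesis .
qed

lemma prob_finite_sum:
  assumes "finite \<Omega>" "set_pmf M \<subseteq> \<Omega>"
  shows "measure_pmf.prob M A = (\<Sum>G\<in>\<Omega>. if G \<in> A then pmf M G else 0)"
proof -
  have "measure_pmf.prob M A = measure_pmf.prob M (A \<inter> \<Omega>)"
    using assms by (intro measure_prob_cong_0) (auto simp: set_pmf_eq)
  also have "\<dots> = sum (pmf M) (\<Omega> \<inter> A)"
    using assms by (simp add: measure_measure_pmf_finite Int_commute)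
  also have "\<dots> = (\<Sum>G\<in>\<Omega>. if G \<in> A then pmf M G else 0)"
    using assms by (simp add: sum.inter_restrict)
  finally show ?thesis .
qed

lemma cheb_fin:
  fixes w X :: "'a \<Rightarrow> real"
  assumes fin: "finite \<Omega>" and w0: "\<forall>x\<in>\<Omega>. w x \<ge> 0" and w1: "sum w \<Omega> = 1"
    and mu: "\<mu> = (\<Sum>x\<in>\<Omega>. w x * X x)" and mupos: "\<mu> > 0"
  shows "(\<Sum>x\<in>\<Omega>. if X x = 0 then w x else 0) \<le> ((\<Sum>x\<in>\<Omega>. w x * (X x)^2) - \<mu>^2) / \<mu>^2"
proof -
  have "(\<Sum>x\<in>\<Omega>. w x * (X x - \<mu>)^2) = (\<Sum>x\<in>\<Omega>. w x * (X x)^2 - 2 * \<mu> * (w x * X x) + \<mu>^2 * w x)"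
    by (rule sum.cong) (auto simp: power2_eq_square algebra_simps)
  also have "\<dots> = (\<Sum>x\<in>\<Omega>. w x * (X x)^2) - 2 * \<mu> * (\<Sum>x\<in>\<Omega>. w x * X x) + \<mu>^2 * sum w \<Omega>"
    by (simp add: sum.distrib sum_subtractf sum_distrib_left)
  also have "\<dots> = (\<Sum>x\<in>\<Omega>. w x * (X x)^2) - \<mu>^2"
    using mu w1 by (simp add: power2_eq_square)
  finally have var: "(\<Sum>x\<in>\<Omega>. w x * (X x - \<mu>)^2) = (\<Sum>x\<in>\<Omega>. w x * (X x)^2) - \<mu>^2" .
  have "(\<Sum>x\<in>\<Omega>. if X x = 0 then w x else 0) * \<mu>^2 = (\<Sum>x\<in>\<Omega>. if X x = 0 then w x * (X x - \<mu>)^2 else 0)"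
    unfolding sum_distrib_right by (rule sum.cong) auto
  also have "\<dots> \<le> (\<Sum>x\<in>\<Omega>. w x * (X x - \<mu>)^2)"
    by (rule sum_mono) (use w0 in auto)
  finally show ?thesis using var mupos by (simp add: pos_le_divide_eq)
qed

lemma second_moment:
  fixes F :: "'b \<Rightarrow> 'a set" and M :: "'a set pmf"
  assumes fin: "finite \<Omega>" and supp: "set_pmf M \<subseteq> \<Omega>" and finS: "finite S"
    and q2: "\<And>\<sigma> \<tau>. \<sigma> \<in> S \<Longrightarrow> \<tau> \<in> S \<Longrightarrow> measure_pmf.prob M {G. F \<sigma> \<union> F \<tau> \<subseteq> G} = q \<sigma> \<tau>"
    and q1: "\<And>\<sigma>. \<sigma> \<in> S \<Longrightarrow> measure_pmf.prob M {G. F \<sigma> \<subseteq> G} = q1 \<sigma>"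
    and mu: "\<mu> = (\<Sum>\<sigma>\<in>S. q1 \<sigma>)" and mupos: "\<mu> > 0"
  shows "measure_pmf.prob M {G. \<forall>\<sigma>\<in>S. \<not> F \<sigma> \<subseteq> G} \<le> ((\<Sum>\<sigma>\<in>S. \<Sum>\<tau>\<in>S. q \<sigma> \<tau>) - \<mu>^2) / \<mu>^2"
proof -
  define w where "w = pmf M"
  define X where "X = (\<lambda>G. (\<Sum>\<sigma>\<in>S. if F \<sigma> \<subseteq> G then 1 else 0) :: real)"
  have P: "\<And>A. measure_pmf.prob M A = (\<Sum>G\<in>\<Omega>. if G \<in> A then w G else 0)"
    unfolding w_def by (rule prob_finite_sum[OF fin supp])
  have w1: "sum w \<Omega> = 1"
    using P[of UNIV] by simp
  have m1: "(\<Sum>G\<in>\<Omega>. w G * X G) = \<mu>"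
  proof -
    have "(\<Sum>G\<in>\<Omega>. w G * X G) = (\<Sum>\<sigma>\<in>S. \<Sum>G\<in>\<Omega>. if G \<in> {G. F \<sigma> \<subseteq> G} then w G else 0)"
      unfolding X_def by (simp add: sum_distrib_left if_distrib sum.swap[of _ \<Omega>] cong: if_cong)
    also have "\<dots> = \<mu>" unfolding mu by (rule sum.cong) (simp_all add: P q1[symmetric])
    finally show ?thesis .
  qed
  have m2: "(\<Sum>G\<in>\<Omega>. w G * (X G)^2) = (\<Sum>\<sigma>\<in>S. \<Sum>\<tau>\<in>S. q \<sigma> \<tau>)"
  proof -
    have "(\<Sum>G\<in>\<Omega>. w G * (X G)^2) = (\<Sum>G\<in>\<Omega>. \<Sum>\<sigma>\<in>S. \<Sum>\<tau>\<in>S. if G \<in> {G. F \<sigma> \<union> F \<tau> \<subseteq> G} then w G else 0)"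
    proof (rule sum.cong[OF refl])
      fix G
      have "(X G)^2 = (\<Sum>\<sigma>\<in>S. \<Sum>\<tau>\<in>S. (if F \<sigma> \<subseteq> G then 1 else 0) * (if F \<tau> \<subseteq> G then 1 else (0::real)))"
        unfolding X_def power2_eq_square sum_product ..
      then show "w G * (X G)^2 = (\<Sum>\<sigma>\<in>S. \<Sum>\<tau>\<in>S. if G \<in> {G. F \<sigma> \<union> F \<tau> \<subseteq> G} then w G else 0)"
        by (simp add: sum_distrib_left) (intro sum.cong refl, auto)
    qed
    also have "\<dots> = (\<Sum>\<sigma>\<in>S. \<Sum>\<tau>\<in>S. \<Sum>G\<in>\<Omega>. if G \<in> {G. F \<sigma> \<union> F \<tau> \<subseteq> G} then w G else 0)"
      by (simp add: sum.swap[of _ \<Omega>])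
    also have "\<dots> = (\<Sum>\<sigma>\<in>S. \<Sum>\<tau>\<in>S. q \<sigma> \<tau>)"
      by (intro sum.cong refl) (simp add: P q2[symmetric])
    finally show ?thesis .
  qed
  have X0: "X G = 0 \<longleftrightarrow> (\<forall>\<sigma>\<in>S. \<not> F \<sigma> \<subseteq> G)" for G
    unfolding X_def using finS by (subst sum_nonneg_eq_0_iff) auto
  have "measure_pmf.prob M {G. \<forall>\<sigma>\<in>S. \<not> F \<sigma> \<subseteq> G} = (\<Sum>G\<in>\<Omega>. if X G = 0 then w G else 0)"
    unfolding P by (simp add: X0)
  also have "\<dots> \<le> ((\<Sum>G\<in>\<Omega>. w G * (X G)^2) - \<mu>^2) / \<mu>^2"
    by (rule cheb_fin[OF fin _ w1 m1[symmetric] mupos]) (simp add: w_def)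
  finally show ?thesis unfolding m2 .
qed


definition pairs :: "nat set \<Rightarrow> nat set set" where
  "pairs \<sigma> = {e. e \<subseteq> \<sigma> \<and> card e = 2}"

lemma finite_pairs: "finite \<sigma> \<Longrightarrow> finite (pairs \<sigma>)"
  unfolding pairs_def by (rule finite_subset[of _ "Pow \<sigma>"]) auto

lemma card_pairs: "finite \<sigma> \<Longrightarrow> card (pairs \<sigma>) = card \<sigma> choose 2"
  unfolding pairs_def by (rule n_subsets)

lemma pairs_Int: "pairs \<sigma> \<inter> pairs \<tau> = pairs (\<sigma> \<inter> \<tau>)"
  unfolding pairs_def by auto

lemma card_pairs_Un:
  assumes "finite \<sigma>" "finite \<tau>" "card \<sigma> = m" "card \<tau> = m"
  shows "card (pairs \<sigma> \<union> pairs \<tau>) = 2 * (m choose 2) - (card (\<sigma> \<inter> \<tau>) choose 2)"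
proof -
  have "card (pairs \<sigma>) + card (pairs \<tau>) = card (pairs \<sigma> \<union> pairs \<tau>) + card (pairs \<sigma> \<inter> pairs \<tau>)"
    by (rule card_Un_Int) (simp_all add: finite_pairs assms)
  then show ?thesis using assms by (simp add: pairs_Int card_pairs)
qed

lemma card_containing:
  assumes A: "A \<subseteq> {0..<n}" "card A = j" and jm: "j \<le> m"
  shows "card {\<tau>. (\<tau> \<subseteq> {0..<n} \<and> card \<tau> = m) \<and> A \<subseteq> \<tau>} \<le> (n - j) choose (m - j)"
proof -
  have finA: "finite A" using A finite_subset by blast
  have "card {\<tau>. (\<tau> \<subseteq> {0..<n} \<and> card \<tau> = m) \<and> A \<subseteq> \<tau>} \<le> card {B. B \<subseteq> {0..<n} - A \<and> card B = m - j}"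
  proof (rule card_inj_on_le)
    show "inj_on (\<lambda>\<tau>. \<tau> - A) {\<tau>. (\<tau> \<subseteq> {0..<n} \<and> card \<tau> = m) \<and> A \<subseteq> \<tau>}"
      by (rule inj_onI) (metis (no_types, lifting) Diff_partition mem_Collect_eq)
    show "(\<lambda>\<tau>. \<tau> - A) ` {\<tau>. (\<tau> \<subseteq> {0..<n} \<and> card \<tau> = m) \<and> A \<subseteq> \<tau>} \<subseteq> {B. B \<subseteq> {0..<n} - A \<and> card B = m - j}"
      using A finA by (auto simp: card_Diff_subset)
    show "finite {B. B \<subseteq> {0..<n} - A \<and> card B = m - j}"
      by (rule finite_subset[of _ "Pow {0..<n}"]) auto
  qed
  also have "\<dots> = card ({0..<n} - A) choose (m - j)"
    by (rule n_subsets) simp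
  also have "\<dots> = (n - j) choose (m - j)"
    using A finA by (simp add: card_Diff_subset)
  finally show ?thesis .
qed

lemma count_intersect:
  assumes \<sigma>: "\<sigma> \<subseteq> {0..<n}" "card \<sigma> = m" and jm: "j \<le> m"
  shows "card {\<tau>. (\<tau> \<subseteq> {0..<n} \<and> card \<tau> = m) \<and> card (\<sigma> \<inter> \<tau>) = j} \<le> (m choose j) * ((n - j) choose (m - j))"
proof -
  define S where "S = {\<tau>. \<tau> \<subseteq> {0..<n} \<and> card \<tau> = m}"
  have finS: "finite S" unfolding S_def by (rule finite_subset[of _ "Pow {0..<n}"]) auto
  have fins: "finite \<sigma>" using \<sigma> finite_subset by blast
  have "{\<tau>\<in>S. card (\<sigma> \<inter> \<tau>) = j} \<subseteq> (\<Union>A\<in>{A. A \<subseteq> \<sigma> \<and> card A = j}. {\<tau>\<in>S. A \<subseteq> \<tau>})"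
  proof
    fix \<tau> assume h: "\<tau> \<in> {\<tau>\<in>S. card (\<sigma> \<inter> \<tau>) = j}"
    show "\<tau> \<in> (\<Union>A\<in>{A. A \<subseteq> \<sigma> \<and> card A = j}. {\<tau>\<in>S. A \<subseteq> \<tau>})"
      by (rule UN_I[of "\<sigma> \<inter> \<tau>"]) (use h in auto)
  qed
  hence "card {\<tau>\<in>S. card (\<sigma> \<inter> \<tau>) = j} \<le> card (\<Union>A\<in>{A. A \<subseteq> \<sigma> \<and> card A = j}. {\<tau>\<in>S. A \<subseteq> \<tau>})"
    by (rule card_mono[rotated]) (rule finite_subset[OF _ finS], blast)
  also have "\<dots> \<le> (\<Sum>A\<in>{A. A \<subseteq> \<sigma> \<and> card A = j}. card {\<tau>\<in>S. A \<subseteq> \<tau>})"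
    by (rule card_UN_le) (use fins in auto)
  also have "\<dots> \<le> (\<Sum>A\<in>{A. A \<subseteq> \<sigma> \<and> card A = j}. (n - j) choose (m - j))"
  proof (rule sum_mono)
    fix A assume "A \<in> {A. A \<subseteq> \<sigma> \<and> card A = j}"
    then have "A \<subseteq> {0..<n}" "card A = j" using \<sigma> by auto
    then show "card {\<tau>\<in>S. A \<subseteq> \<tau>} \<le> (n - j) choose (m - j)"
      using card_containing[OF _ _ jm, of A n] by (simp add: S_def)
  qed
  also have "\<dots> = (m choose j) * ((n - j) choose (m - j))"
    using n_subsets[OF fins, of j] \<sigma> by simp
  finally show ?thesis by (simp add: S_def)
qed


lemma sum_bound:
  fixes p :: real
  assumes \<sigma>: "\<sigma> \<subseteq> {0..<n}" "card \<sigma> = m" and p: "0 < p" "p \<le> 1" and m2: "2 \<le> m"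
  defines "S \<equiv> {\<tau>. \<tau> \<subseteq> {0..<n} \<and> card \<tau> = m}"
  shows "(\<Sum>\<tau>\<in>S. p ^ card (pairs \<sigma> \<union> pairs \<tau>)) \<le>
     p ^ (2 * (m choose 2)) * (real (card S) + (\<Sum>j\<in>{2..m}. (1/p) ^ (j choose 2) * real ((m choose j) * ((n - j) choose (m - j)))))"
proof -
  define k where "k = m choose 2"
  define g where "g = (\<lambda>j::nat. (1/p) ^ (j choose 2))"
  define c where "c = (\<lambda>j. card {\<tau>\<in>S. card (\<sigma> \<inter> \<tau>) = j})"
  have finS: "finite S" unfolding S_def by (rule finite_subset[of _ "Pow {0..<n}"]) auto
  have fins: "finite \<sigma>" using \<sigma> finite_subset by blast
  have g1: "g j \<ge> 1" for j unfolding g_def using p by (simp add: one_le_power)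
  have jm: "card (\<sigma> \<inter> \<tau>) \<le> m" for \<tau> using \<sigma> fins by (metis Int_lower1 card_mono)
  have trm: "p ^ card (pairs \<sigma> \<union> pairs \<tau>) = p ^ (2 * k) * g (card (\<sigma> \<inter> \<tau>))" if "\<tau> \<in> S" for \<tau>
  proof -
    have ft: "finite \<tau>" "card \<tau> = m" using that unfolding S_def using finite_subset by auto
    have le: "card (\<sigma> \<inter> \<tau>) choose 2 \<le> 2 * k"
      using binomial_right_mono[OF jm[of \<tau>], of 2] unfolding k_def by linarith
    have "p ^ card (pairs \<sigma> \<union> pairs \<tau>) = p ^ (2 * k - (card (\<sigma> \<inter> \<tau>) choose 2))"
      using card_pairs_Un[OF fins ft(1) \<sigma>(2) ft(2)] by (simp add: k_def)
    also have "\<dots> = p ^ (2 * k) / p ^ (card (\<sigma> \<inter> \<tau>) choose 2)"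
      using p le by (simp add: power_diff)
    also have "\<dots> = p ^ (2 * k) * g (card (\<sigma> \<inter> \<tau>))"
      by (simp add: g_def power_one_over)
    finally show ?thesis .
  qed
  have img: "(\<lambda>\<tau>. card (\<sigma> \<inter> \<tau>)) ` S \<subseteq> {0..m}" using jm by auto
  have "(\<Sum>\<tau>\<in>S. p ^ card (pairs \<sigma> \<union> pairs \<tau>)) = p ^ (2 * k) * (\<Sum>\<tau>\<in>S. g (card (\<sigma> \<inter> \<tau>)))"
    by (simp add: trm sum_distrib_left)
  also have "(\<Sum>\<tau>\<in>S. g (card (\<sigma> \<inter> \<tau>))) = (\<Sum>j\<in>{0..m}. \<Sum>\<tau>\<in>{\<tau>\<in>S. card (\<sigma> \<inter> \<tau>) = j}. g (card (\<sigma> \<inter> \<tau>)))"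
    by (rule sum.group[symmetric, OF finS _ img]) simp
  also have "\<dots> = (\<Sum>j\<in>{0..m}. g j * real (c j))"
    unfolding c_def by (intro sum.cong refl) simp
  also have "\<dots> = (\<Sum>j\<in>{0..m}. real (c j)) + (\<Sum>j\<in>{0..m}. (g j - 1) * real (c j))"
    by (simp add: sum.distrib[symmetric] algebra_simps)
  also have "(\<Sum>j\<in>{0..m}. real (c j)) = real (card S)"
  proof -
    have "(\<Sum>j\<in>{0..m}. \<Sum>\<tau>\<in>{\<tau>\<in>S. card (\<sigma> \<inter> \<tau>) = j}. (1::real)) = (\<Sum>\<tau>\<in>S. 1)"
      by (rule sum.group[OF finS _ img]) simp
    then show ?thesis unfolding c_def by simp
  qed
  also have "(\<Sum>j\<in>{0..m}. (g j - 1) * real (c j)) = (\<Sum>j\<in>{2..m}. (g j - 1) * real (c j))"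
  proof (rule sum.mono_neutral_right)
    show "\<forall>i\<in>{0..m} - {2..m}. (g i - 1) * real (c i) = 0"
    proof
      fix i assume "i \<in> {0..m} - {2..m}"
      then have "i = 0 \<or> i = 1" by auto
      then show "(g i - 1) * real (c i) = 0" by (auto simp: g_def numeral_2_eq_2)
    qed
  qed auto
  also have "(\<Sum>j\<in>{2..m}. (g j - 1) * real (c j)) \<le> (\<Sum>j\<in>{2..m}. g j * real ((m choose j) * ((n - j) choose (m - j))))"
  proof (rule sum_mono)
    fix j assume "j \<in> {2..m}"
    then have "c j \<le> (m choose j) * ((n - j) choose (m - j))"
      unfolding c_def S_def using count_intersect[OF \<sigma>, of j] by simp
    then have "real (c j) \<le> real ((m choose j) * ((n - j) choose (m - j)))" by linarith
    moreover have "0 \<le> g j - 1" "g j - 1 \<le> g j" using g1[of j] by auto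
    ultimately show "(g j - 1) * real (c j) \<le> g j * real ((m choose j) * ((n - j) choose (m - j)))"
      by (meson mult_mono of_nat_0_le_iff order_trans)
  qed
  finally show ?thesis using p unfolding k_def g_def
    by (simp add: mult_left_mono)
qed


lemma ratio_bound:
  assumes "2 \<le> j" "j \<le> m" "m \<le> n"
  shows "real ((m choose j) * ((n - j) choose (m - j))) / real (n choose m)
     \<le> real (m choose j) ^ 2 * real j ^ j / real n ^ j"
proof -
  have cm: "(n choose m) * (m choose j) = (n choose j) * ((n - j) choose (m - j))"
    using assms by (intro choose_mult) auto
  have npos: "0 < real (n choose m)" "0 < real (n choose j)" using assms by auto
  have "real ((m choose j) * ((n - j) choose (m - j))) / real (n choose m)
      = real (m choose j) ^ 2 / real (n choose j)"
  proof -
    have "real (m choose j) * real ((n - j) choose (m - j)) * real (n choose j)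
        = real (m choose j) ^ 2 * real (n choose m)"
      using arg_cong[OF cm, of real] by (simp add: power2_eq_square algebra_simps)
    then show ?thesis using npos by (simp add: field_simps)
  qed
  also have "\<dots> \<le> real (m choose j) ^ 2 / ((real n / real j) ^ j)"
  proof (rule divide_left_mono)
    show "(real n / real j) ^ j \<le> real (n choose j)"
      using binomial_ge_n_over_k_pow_k[of j n] assms by simp
    show "0 < real (n choose j) * (real n / real j) ^ j" using npos assms by simp
  qed simp
  also have "\<dots> = real (m choose j) ^ 2 * real j ^ j / real n ^ j"
    using assms by (simp add: power_divide)
  finally show ?thesis .
qed

lemma clique_prob:
  fixes p :: real
  assumes p: "0 < p" "p \<le> 1" and m2: "2 \<le> m" and mn: "m \<le> n"
    and finE: "finite (edges L)"
    and sub: "\<And>\<sigma>. \<sigma> \<subseteq> {0..<n} \<Longrightarrow> card \<sigma> = m \<Longrightarrow> pairs \<sigma> \<subseteq> edges L"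
  shows "measure_pmf.prob (random_graph L p) {G. \<forall>\<sigma>\<in>{\<tau>. \<tau> \<subseteq> {0..<n} \<and> card \<tau> = m}. \<not> pairs \<sigma> \<subseteq> G}
     \<le> (\<Sum>j\<in>{2..m}. real (m choose j) ^ 2 * real j ^ j / (real n ^ j * p ^ (j choose 2)))"
proof -
  define S where "S = {\<tau>. \<tau> \<subseteq> {0..<n} \<and> card \<tau> = m}"
  define k where "k = m choose 2"
  define N where "N = real (card S)"
  define R where "R = (\<Sum>j\<in>{2..m}. (1/p) ^ (j choose 2) * real ((m choose j) * ((n - j) choose (m - j))))"
  define \<mu> where "\<mu> = N * p ^ k"
  have finS: "finite S" unfolding S_def by (rule finite_subset[of _ "Pow {0..<n}"]) auto
  have cardS: "card S = n choose m" unfolding S_def using n_subsets[of "{0..<n}" m] by simp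
  have Npos: "N > 0" unfolding N_def cardS using mn by simp
  have fin\<sigma>: "finite \<sigma>" if "\<sigma> \<in> S" for \<sigma> using that unfolding S_def using finite_subset by blast
  have q2: "measure_pmf.prob (random_graph L p) {G. pairs \<sigma> \<union> pairs \<tau> \<subseteq> G} = p ^ card (pairs \<sigma> \<union> pairs \<tau>)"
    if "\<sigma> \<in> S" "\<tau> \<in> S" for \<sigma> \<tau>
    using that p by (intro rg_subset finE) (auto simp: S_def dest: sub)
  have q1: "measure_pmf.prob (random_graph L p) {G. pairs \<sigma> \<subseteq> G} = p ^ k" if "\<sigma> \<in> S" for \<sigma>
  proof -
    have "measure_pmf.prob (random_graph L p) {G. pairs \<sigma> \<subseteq> G} = p ^ card (pairs \<sigma>)"
      using that p by (intro rg_subset finE) (auto simp: S_def dest: sub)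
    then show ?thesis using that card_pairs[OF fin\<sigma>[OF that]] by (simp add: S_def k_def)
  qed
  have mu: "\<mu> = (\<Sum>\<sigma>\<in>S. p ^ k)" unfolding \<mu>_def N_def by simp
  have mupos: "\<mu> > 0" unfolding \<mu>_def using Npos p by simp
  have "measure_pmf.prob (random_graph L p) {G. \<forall>\<sigma>\<in>S. \<not> pairs \<sigma> \<subseteq> G}
      \<le> ((\<Sum>\<sigma>\<in>S. \<Sum>\<tau>\<in>S. p ^ card (pairs \<sigma> \<union> pairs \<tau>)) - \<mu>^2) / \<mu>^2"
    by (rule second_moment[OF finite_Pow_iff[THEN iffD2, OF finE] rg_support finS q2 q1 mu mupos])
  also have "\<dots> \<le> ((\<Sum>\<sigma>\<in>S. p ^ (2 * k) * (N + R)) - \<mu>^2) / \<mu>^2"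
  proof (rule divide_right_mono)
    have "(\<Sum>\<sigma>\<in>S. \<Sum>\<tau>\<in>S. p ^ card (pairs \<sigma> \<union> pairs \<tau>)) \<le> (\<Sum>\<sigma>\<in>S. p ^ (2 * k) * (N + R))"
    proof (rule sum_mono)
      fix \<sigma> assume "\<sigma> \<in> S"
      then have "\<sigma> \<subseteq> {0..<n}" "card \<sigma> = m" by (auto simp: S_def)
      from sum_bound[OF this p m2] show "(\<Sum>\<tau>\<in>S. p ^ card (pairs \<sigma> \<union> pairs \<tau>)) \<le> p ^ (2 * k) * (N + R)"
        unfolding S_def N_def R_def k_def .
    qed
    then show "(\<Sum>\<sigma>\<in>S. \<Sum>\<tau>\<in>S. p ^ card (pairs \<sigma> \<union> pairs \<tau>)) - \<mu>^2 \<le> (\<Sum>\<sigma>\<in>S. p ^ (2 * k) * (N + R)) - \<mu>^2"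
      by simp
  qed simp
  also have "\<dots> = R / N"
  proof -
    have "(\<Sum>\<sigma>\<in>S. p ^ (2 * k) * (N + R)) = N * p ^ (2 * k) * (N + R)" unfolding N_def by simp
    moreover have "\<mu>^2 = N^2 * p ^ (2 * k)" unfolding \<mu>_def by (simp add: power_mult_distrib power_mult[symmetric] mult.commute)
    ultimately show ?thesis using Npos p by (simp add: field_simps power2_eq_square)
  qed
  also have "\<dots> = (\<Sum>j\<in>{2..m}. (1/p) ^ (j choose 2) * (real ((m choose j) * ((n - j) choose (m - j))) / real (n choose m)))"
    unfolding R_def N_def cardS by (simp add: sum_divide_distrib)
  also have "\<dots> \<le> (\<Sum>j\<in>{2..m}. (1/p) ^ (j choose 2) * (real (m choose j) ^ 2 * real j ^ j / real n ^ j))"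
    by (intro sum_mono mult_left_mono ratio_bound) (use mn p in auto)
  also have "\<dots> = (\<Sum>j\<in>{2..m}. real (m choose j) ^ 2 * real j ^ j / (real n ^ j * p ^ (j choose 2)))"
    by (intro sum.cong refl) (simp add: power_one_over)
  finally show ?thesis unfolding S_def .
qed


lemma clique_pairs:
  assumes "\<forall>u\<in>\<tau>. \<forall>v\<in>\<tau>. u \<noteq> v \<longrightarrow> {u, v} \<in> G" "\<sigma> \<subseteq> \<tau>"
  shows "pairs \<sigma> \<subseteq> G"
proof
  fix e assume "e \<in> pairs \<sigma>"
  then have "e \<subseteq> \<sigma>" "card e = 2" by (auto simp: pairs_def)
  then obtain u v where "e = {u, v}" "u \<noteq> v" by (auto simp: card_2_iff)
  then show "e \<in> G" using assms \<open>e \<subseteq> \<sigma>\<close> by auto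
qed

lemma pairs_clique:
  assumes "pairs \<sigma> \<subseteq> G"
  shows "\<forall>u\<in>\<sigma>. \<forall>v\<in>\<sigma>. u \<noteq> v \<longrightarrow> {u, v} \<in> G"
  using assms unfolding pairs_def by auto

lemma big_event:
  assumes L: "simplicial_complex_on n L" and bad: "\<not> cdim (X_GL n G L) \<le> int r"
  shows "\<exists>\<sigma>\<in>{\<sigma>\<in>L. card \<sigma> = r + 2}. pairs \<sigma> \<subseteq> G"
proof -
  let ?X = "X_GL n G L"
  have finX: "finite ?X"
    by (rule finite_subset[OF _ finite_Delta[of n]]) (auto simp: X_GL_def clique_complex_def)
  have ne: "?X \<noteq> {}" using bad by (auto simp: cdim_def)
  have "int (Max (card ` ?X)) - 1 > int r" using bad ne by (simp add: cdim_def)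
  then have "Max (card ` ?X) \<ge> r + 2" by linarith
  then obtain \<tau> where \<tau>: "\<tau> \<in> ?X" "card \<tau> \<ge> r + 2"
    using Max_in[of "card ` ?X"] finX ne by fastforce
  then obtain \<sigma> where \<sigma>: "\<sigma> \<subseteq> \<tau>" "card \<sigma> = r + 2" by (meson obtain_subset_with_card_n)
  have "\<tau> \<in> L" "\<forall>u\<in>\<tau>. \<forall>v\<in>\<tau>. u \<noteq> v \<longrightarrow> {u, v} \<in> G"
    using \<tau> by (auto simp: X_GL_def clique_complex_def)
  moreover have "\<sigma> \<noteq> {}" using \<sigma> by auto
  ultimately have "\<sigma> \<in> L" using L \<sigma> unfolding simplicial_complex_on_def by blast
  then show ?thesis using \<sigma> clique_pairs[OF \<open>\<forall>u\<in>\<tau>. _\<close> \<sigma>(1)] by auto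
qed

lemma big_prob:
  fixes p :: real
  assumes L: "simplicial_complex_on n L" and p: "0 \<le> p" "p \<le> 1"
  shows "measure_pmf.prob (random_graph L p) {G. \<not> cdim (X_GL n G L) \<le> int r}
     \<le> real n ^ (r + 2) * p ^ ((r + 2) choose 2)"
proof -
  define T where "T = {\<sigma>\<in>L. card \<sigma> = r + 2}"
  have LD: "L \<subseteq> Delta n" using L by (simp add: simplicial_complex_on_def)
  have finE: "finite (edges L)" by (rule finite_edges[OF LD])
  have finT: "finite T" unfolding T_def using finite_subset[OF LD finite_Delta] by simp
  have Tsub: "T \<subseteq> {\<sigma>. \<sigma> \<subseteq> {0..<n} \<and> card \<sigma> = r + 2}" using LD by (auto simp: T_def Delta_def)
  have cardT: "card T \<le> n choose (r + 2)"
    using card_mono[OF _ Tsub] n_subsets[of "{0..<n}" "r+2"] by simp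
  have pe: "pairs \<sigma> \<subseteq> edges L" if "\<sigma> \<in> T" for \<sigma>
  proof
    fix e assume "e \<in> pairs \<sigma>"
    then have "e \<subseteq> \<sigma>" "card e = 2" by (auto simp: pairs_def)
    moreover have "e \<noteq> {}" using \<open>card e = 2\<close> by auto
    ultimately show "e \<in> edges L" using L that unfolding simplicial_complex_on_def edges_def T_def by blast
  qed
  have cp: "card (pairs \<sigma>) = (r + 2) choose 2" if "\<sigma> \<in> T" for \<sigma>
  proof -
    have "card \<sigma> = r + 2" using that unfolding T_def by simp
    then have "finite \<sigma>" by (metis card.infinite add_eq_0_iff_both_eq_0 zero_neq_numeral)
    then show ?thesis using card_pairs that by (simp add: T_def)
  qed
  have "measure_pmf.prob (random_graph L p) {G. \<not> cdim (X_GL n G L) \<le> int r}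
      \<le> measure_pmf.prob (random_graph L p) (\<Union>\<sigma>\<in>T. {G. pairs \<sigma> \<subseteq> G})"
    by (rule measure_pmf.finite_measure_mono) (use big_event[OF L] in \<open>auto simp: T_def\<close>)
  also have "\<dots> \<le> (\<Sum>\<sigma>\<in>T. measure_pmf.prob (random_graph L p) {G. pairs \<sigma> \<subseteq> G})"
    by (rule measure_pmf.finite_measure_subadditive_finite[OF finT]) auto
  also have "\<dots> = (\<Sum>\<sigma>\<in>T. p ^ ((r + 2) choose 2))"
    by (intro sum.cong refl) (simp add: rg_subset[OF finE pe p] cp)
  also have "\<dots> = real (card T) * p ^ ((r + 2) choose 2)" by simp
  also have "\<dots> \<le> real n ^ (r + 2) * p ^ ((r + 2) choose 2)"
  proof (rule mult_right_mono)
    have "n choose (r + 2) \<le> n ^ (r + 2)"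
    proof (cases "r + 2 \<le> n")
      case True then show ?thesis by (rule binomial_le_pow)
    next
      case False then show ?thesis by (simp add: binomial_eq_0)
    qed
    then have "card T \<le> n ^ (r + 2)" using cardT by linarith
    then show "real (card T) \<le> real n ^ (r + 2)" by (metis of_nat_le_iff of_nat_power)
  qed (use p in simp)
  finally show ?thesis .
qed


lemma two_choose2: "2 * (k choose 2) = k * (k - 1)"
  by (induction k) (auto simp: numeral_2_eq_2 algebra_simps)

lemma real_choose2: "real (k choose 2) = real k * (real k - 1) / 2"
proof (cases k)
  case 0 then show ?thesis by simp
next
  case (Suc k')
  have "real (2 * (k choose 2)) = real (k * (k - 1))" by (simp only: two_choose2)
  then have h: "2 * real (k choose 2) = real k * (real k - 1)" using Suc by (simp add: of_nat_diff algebra_simps)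
  then show ?thesis by linarith
qed

lemma pow_eq1:
  fixes s :: real
  assumes n: "1 \<le> n" and s: "0 \<le> s"
  shows "real n ^ (r + 2) * (s * real n powr (-2 / (real r + 1))) ^ ((r + 2) choose 2) = s ^ ((r + 2) choose 2)"
proof -
  define c where "c = (r + 2) choose 2"
  have nz: "real n \<noteq> 0" "real n > 0" using n by auto
  have rc: "real c * (-2 / (real r + 1)) = - real (r + 2)"
    unfolding c_def real_choose2 by (simp add: field_simps)
  have "real n ^ (r + 2) * (s * real n powr (-2 / (real r + 1))) ^ c
     = s ^ c * (real n powr real (r + 2) * real n powr (real c * (-2 / (real r + 1))))"
  proof -
    have "real n ^ (r + 2) = real n powr real (r + 2)" by (rule powr_realpow[symmetric]) (use nz in auto)
    moreover have "(real n powr (-2 / (real r + 1))) ^ c = real n powr (real c * (-2 / (real r + 1)))"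
      by (rule powr_power) (use nz in simp)
    ultimately show ?thesis by (simp only: power_mult_distrib mult_ac)
  qed
  also have "\<dots> = s ^ c" unfolding rc using nz by (simp add: powr_add[symmetric])
  finally show ?thesis unfolding c_def .
qed

lemma pow_ge2:
  fixes t :: real
  assumes n: "1 \<le> n" and t: "1 \<le> t" and j: "2 \<le> j" "j \<le> r + 1" and r: "1 \<le> r"
  shows "t \<le> real n ^ j * (t * real n powr (-2 / real r)) ^ (j choose 2)"
proof -
  define c where "c = j choose 2"
  have nz: "real n \<noteq> 0" "real n \<ge> 1" using n by auto
  have c1: "1 \<le> c" unfolding c_def using binomial_right_mono[OF j(1), of 2] by simp
  have e: "real j + real c * (-2 / real r) \<ge> 0"
  proof -
    have "real c * (-2 / real r) = - real j * (real j - 1) / real r"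
      unfolding c_def real_choose2 using r by (simp add: field_simps)
    moreover have "real j * (real j - 1) / real r \<le> real j"
    proof -
      have "real j - 1 \<le> real r" using j by simp
      then have "real j * (real j - 1) \<le> real j * real r" by (intro mult_left_mono) auto
      then show ?thesis using r by (simp add: divide_le_eq)
    qed
    ultimately show ?thesis by linarith
  qed
  have "real n ^ j * (t * real n powr (-2 / real r)) ^ c
      = t ^ c * (real n powr real j * real n powr (real c * (-2 / real r)))"
  proof -
    have "real n ^ j = real n powr real j" by (rule powr_realpow[symmetric]) (use nz in auto)
    moreover have "(real n powr (-2 / real r)) ^ c = real n powr (real c * (-2 / real r))"
      by (rule powr_power) (use nz in simp)
    ultimately show ?thesis by (simp only: power_mult_distrib mult_ac)
  qed
  also have "\<dots> = t ^ c * real n powr (real j + real c * (-2 / real r))"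
    by (simp only: powr_add)
  also have "\<dots> \<ge> t ^ c * 1"
    using e nz t by (intro mult_left_mono ge_one_powr_ge_zero) auto
  also have "t ^ c * 1 \<ge> t" using t c1
    by (metis mult.right_neutral power_increasing power_one_right zero_le_one order_trans)
  finally show ?thesis unfolding c_def by simp
qed


lemma aas_from_bad:
  assumes "(\<lambda>n. measure_pmf.prob (M n) {x. \<not> P n x}) \<longlonglongrightarrow> 0"
  shows "aas M P"
proof -
  have eq: "measure_pmf.prob (M n) {x. P n x} = 1 - measure_pmf.prob (M n) {x. \<not> P n x}" for n
  proof -
    have "{x. P n x} = space (measure_pmf (M n)) - {x. \<not> P n x}" by auto
    then show ?thesis using measure_pmf.prob_compl[of "{x. \<not> P n x}" "M n"] by simp
  qed
  show ?thesis unfolding aas_def eq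
    using tendsto_diff[OF tendsto_const[of 1] assms] by simp
qed

lemma part1:
  fixes r :: nat and L :: "nat \<Rightarrow> nat set set" and p1 :: "nat \<Rightarrow> real"
  assumes L: "\<And>n. simplicial_complex_on n (L n)"
    and p: "\<And>n. 0 \<le> p1 n \<and> p1 n \<le> 1"
    and lim: "(\<lambda>n. p1 n / real n powr (-2 / (real r + 1))) \<longlonglongrightarrow> 0"
  shows "(\<lambda>n. measure_pmf.prob (random_graph (L n) (p1 n)) {G. \<not> cdim (X_GL n G (L n)) \<le> int r}) \<longlonglongrightarrow> 0"
proof -
  define s where "s = (\<lambda>n. p1 n / real n powr (-2 / (real r + 1)))"
  define c where "c = (r + 2) choose 2"
  have c0: "c \<noteq> 0" unfolding c_def by simp
  have "(\<lambda>n. s n ^ c) \<longlonglongrightarrow> 0 ^ c" unfolding s_def by (intro tendsto_power lim)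
  then have sc: "(\<lambda>n. s n ^ c) \<longlonglongrightarrow> 0" using c0 by (simp only: power_0_left if_False)
  have ev: "eventually (\<lambda>n. measure_pmf.prob (random_graph (L n) (p1 n)) {G. \<not> cdim (X_GL n G (L n)) \<le> int r} \<le> s n ^ c) sequentially"
    using eventually_ge_at_top[of 1]
  proof eventually_elim
    case (elim n)
    have pos: "real n powr (-2 / (real r + 1)) > 0" using elim by simp
    have pe: "p1 n = s n * real n powr (-2 / (real r + 1))" unfolding s_def using pos by simp
    have s0: "0 \<le> s n" unfolding s_def using p[of n] pos by simp
    have "measure_pmf.prob (random_graph (L n) (p1 n)) {G. \<not> cdim (X_GL n G (L n)) \<le> int r}
        \<le> real n ^ (r + 2) * p1 n ^ ((r + 2) choose 2)"
      using big_prob[OF L] p by blast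
    also have "\<dots> = s n ^ c" unfolding pe c_def by (rule pow_eq1[OF elim s0])
    finally show ?case .
  qed
  show ?thesis
    by (rule tendsto_sandwich[OF _ ev tendsto_const sc]) simp
qed


lemma part2_noclique:
  fixes r :: nat and L :: "nat \<Rightarrow> nat set set" and p1 :: "nat \<Rightarrow> real"
  assumes r: "r \<ge> 2"
    and L: "\<And>n. simplicial_complex_on n (L n)"
    and p: "\<And>n. 0 \<le> p1 n \<and> p1 n \<le> 1"
    and lim: "filterlim (\<lambda>n. p1 n / real n powr (-2 / real r)) at_top sequentially"
    and Sk: "\<forall>n. Sk r (L n) = Sk r (Delta n)"
  shows "(\<lambda>n. measure_pmf.prob (random_graph (L n) (p1 n))
      {G. \<forall>\<sigma>\<in>{\<tau>. \<tau> \<subseteq> {0..<n} \<and> card \<tau> = r + 1}. \<not> pairs \<sigma> \<subseteq> G}) \<longlonglongrightarrow> 0"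
proof -
  define t where "t = (\<lambda>n. p1 n / real n powr (-2 / real r))"
  define K where "K = (\<Sum>j\<in>{2..r+1}. real ((r + 1) choose j) ^ 2 * real j ^ j)"
  have Kt: "(\<lambda>n. K / t n) \<longlonglongrightarrow> 0"
    by (rule tendsto_divide_0[OF tendsto_const]) (use lim in \<open>simp add: t_def filterlim_at_top_imp_at_infinity\<close>)
  have ev: "eventually (\<lambda>n. measure_pmf.prob (random_graph (L n) (p1 n))
      {G. \<forall>\<sigma>\<in>{\<tau>. \<tau> \<subseteq> {0..<n} \<and> card \<tau> = r + 1}. \<not> pairs \<sigma> \<subseteq> G} \<le> K / t n) sequentially"
    using eventually_ge_at_top[of "r + 1"] filterlim_at_top[THEN iffD1, OF lim, rule_format, of 1]
  proof eventually_elim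
    case (elim n)
    have n1: "1 \<le> n" using elim by simp
    have t1: "1 \<le> t n" using elim by (simp add: t_def)
    have pos: "real n powr (-2 / real r) > 0" using n1 by simp
    have pe: "p1 n = t n * real n powr (-2 / real r)" unfolding t_def using pos by simp
    have ppos: "0 < p1 n" unfolding pe using t1 pos by simp
    have LD: "L n \<subseteq> Delta n" using L[of n] by (simp add: simplicial_complex_on_def)
    have sub: "pairs \<sigma> \<subseteq> edges (L n)" if "\<sigma> \<subseteq> {0..<n}" "card \<sigma> = r + 1" for \<sigma>
    proof
      fix e assume "e \<in> pairs \<sigma>"
      then have e: "e \<subseteq> \<sigma>" "card e = 2" by (auto simp: pairs_def)
      then have "e \<in> Sk r (Delta n)" using that r by (auto simp: Sk_def Delta_def)
      then have "e \<in> Sk r (L n)" using Sk by simp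
      then show "e \<in> edges (L n)" using e by (simp add: Sk_def edges_def)
    qed
    have "measure_pmf.prob (random_graph (L n) (p1 n))
      {G. \<forall>\<sigma>\<in>{\<tau>. \<tau> \<subseteq> {0..<n} \<and> card \<tau> = r + 1}. \<not> pairs \<sigma> \<subseteq> G}
      \<le> (\<Sum>j\<in>{2..r+1}. real ((r+1) choose j) ^ 2 * real j ^ j / (real n ^ j * p1 n ^ (j choose 2)))"
      by (rule clique_prob[OF ppos _ _ elim(1) finite_edges[OF LD] sub]) (use p r in auto)
    also have "\<dots> \<le> (\<Sum>j\<in>{2..r+1}. real ((r+1) choose j) ^ 2 * real j ^ j / t n)"
    proof (rule sum_mono)
      fix j assume j: "j \<in> {2..r+1}"
      have "t n \<le> real n ^ j * p1 n ^ (j choose 2)"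
        unfolding pe by (rule pow_ge2) (use n1 t1 j r in auto)
      then show "real ((r+1) choose j) ^ 2 * real j ^ j / (real n ^ j * p1 n ^ (j choose 2))
          \<le> real ((r+1) choose j) ^ 2 * real j ^ j / t n"
        using t1 by (intro divide_left_mono) auto
    qed
    also have "\<dots> = K / t n" unfolding K_def by (rule sum_divide_distrib[symmetric])
    finally show ?case .
  qed
  show ?thesis
    by (rule tendsto_sandwich[OF _ ev tendsto_const Kt]) simp
qed

lemma clique_dim:
  assumes Sk: "Sk r L = Sk r (Delta n)" and \<sigma>: "\<sigma> \<subseteq> {0..<n}" "card \<sigma> = r + 1" "pairs \<sigma> \<subseteq> G"
  shows "int r \<le> cdim (X_GL n G L)"
proof -
  let ?X = "X_GL n G L"
  have finX: "finite ?X"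
    by (rule finite_subset[OF _ finite_Delta[of n]]) (auto simp: X_GL_def clique_complex_def)
  have D: "\<sigma> \<in> Delta n" using \<sigma> by (auto simp: Delta_def)
  then have "\<sigma> \<in> Sk r (Delta n)" using \<sigma> by (simp add: Sk_def)
  then have "\<sigma> \<in> Sk r L" using Sk by simp
  then have "\<sigma> \<in> L" by (simp add: Sk_def)
  then have inX: "\<sigma> \<in> ?X" using D pairs_clique[OF \<sigma>(3)] by (simp add: X_GL_def clique_complex_def)
  then have "card \<sigma> \<le> Max (card ` ?X)" using finX by simp
  then show ?thesis using inX \<sigma> by (auto simp: cdim_def)
qed


theorem lemma5p1:
  fixes r :: nat and L :: "nat \<Rightarrow> nat set set" and p1 :: "nat \<Rightarrow> real"
  assumes "r \<ge> 2"
    and "\<And>n. simplicial_complex_on n (L n)"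
    and "\<And>n. 0 \<le> p1 n \<and> p1 n \<le> 1"
    and "(\<lambda>n. p1 n / real n powr (-2 / (real r + 1))) \<longlonglongrightarrow> 0"
  shows "aas (\<lambda>n. random_graph (L n) (p1 n)) (\<lambda>n G. cdim (X_GL n G (L n)) \<le> int r)
    \<and> ((filterlim (\<lambda>n. p1 n / real n powr (-2 / real r)) at_top sequentially
         \<and> (\<forall>n. Sk r (L n) = Sk r (Delta n)))
        \<longrightarrow> aas (\<lambda>n. random_graph (L n) (p1 n)) (\<lambda>n G. cdim (X_GL n G (L n)) = int r))"
proof
  show A: "aas (\<lambda>n. random_graph (L n) (p1 n)) (\<lambda>n G. cdim (X_GL n G (L n)) \<le> int r)"
    by (rule aas_from_bad) (use part1[OF assms(2,3,4)] in simp)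
  show "(filterlim (\<lambda>n. p1 n / real n powr (-2 / real r)) at_top sequentially
         \<and> (\<forall>n. Sk r (L n) = Sk r (Delta n)))
        \<longrightarrow> aas (\<lambda>n. random_graph (L n) (p1 n)) (\<lambda>n G. cdim (X_GL n G (L n)) = int r)"
  proof
    assume h: "filterlim (\<lambda>n. p1 n / real n powr (-2 / real r)) at_top sequentially
         \<and> (\<forall>n. Sk r (L n) = Sk r (Delta n))"
    define M where "M = (\<lambda>n. random_graph (L n) (p1 n))"
    define NC where "NC = (\<lambda>n. {G. \<forall>\<sigma>\<in>{\<tau>. \<tau> \<subseteq> {0..<n} \<and> card \<tau> = r + 1}. \<not> pairs \<sigma> \<subseteq> G})"
    have Q: "(\<lambda>n. measure_pmf.prob (M n) (NC n)) \<longlonglongrightarrow> 0"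
      unfolding M_def NC_def by (rule part2_noclique[OF assms(1,2)]) (use assms(3) h in auto)
    have Alim: "(\<lambda>n. measure_pmf.prob (M n) {G. cdim (X_GL n G (L n)) \<le> int r}) \<longlonglongrightarrow> 1"
      using A unfolding aas_def M_def by simp
    have low: "measure_pmf.prob (M n) {G. cdim (X_GL n G (L n)) \<le> int r} - measure_pmf.prob (M n) (NC n)
        \<le> measure_pmf.prob (M n) {G. cdim (X_GL n G (L n)) = int r}" for n
    proof -
      have "{G. cdim (X_GL n G (L n)) \<le> int r} \<subseteq> {G. cdim (X_GL n G (L n)) = int r} \<union> NC n"
      proof
        fix G assume G: "G \<in> {G. cdim (X_GL n G (L n)) \<le> int r}"
        show "G \<in> {G. cdim (X_GL n G (L n)) = int r} \<union> NC n"
        proof (cases "G \<in> NC n")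
          case False
          then obtain \<sigma> where "\<sigma> \<subseteq> {0..<n}" "card \<sigma> = r + 1" "pairs \<sigma> \<subseteq> G"
            unfolding NC_def by auto
          moreover have "Sk r (L n) = Sk r (Delta n)" using h by blast
          ultimately have "int r \<le> cdim (X_GL n G (L n))" by (intro clique_dim)
          then have "cdim (X_GL n G (L n)) = int r" using G by simp
          then show ?thesis by simp
        qed simp
      qed
      then have "measure_pmf.prob (M n) {G. cdim (X_GL n G (L n)) \<le> int r}
          \<le> measure_pmf.prob (M n) ({G. cdim (X_GL n G (L n)) = int r} \<union> NC n)"
        by (rule measure_pmf.finite_measure_mono) simp_all
      also have "\<dots> \<le> measure_pmf.prob (M n) {G. cdim (X_GL n G (L n)) = int r} + measure_pmf.prob (M n) (NC n)"
        by (rule measure_Un_le) auto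
      finally show ?thesis by simp
    qed
    have "(\<lambda>n. measure_pmf.prob (M n) {G. cdim (X_GL n G (L n)) \<le> int r} - measure_pmf.prob (M n) (NC n)) \<longlonglongrightarrow> 1 - 0"
      by (intro tendsto_diff Alim Q)
    have "(\<lambda>n. measure_pmf.prob (M n) {G. cdim (X_GL n G (L n)) = int r}) \<longlonglongrightarrow> 1"
    proof (rule tendsto_sandwich[OF _ _ _ tendsto_const[of 1]])
      show "eventually (\<lambda>n. measure_pmf.prob (M n) {G. cdim (X_GL n G (L n)) \<le> int r} - measure_pmf.prob (M n) (NC n)
          \<le> measure_pmf.prob (M n) {G. cdim (X_GL n G (L n)) = int r}) sequentially"
        by (rule always_eventually) (rule allI, rule low)
      show "eventually (\<lambda>n. measure_pmf.prob (M n) {G. cdim (X_GL n G (L n)) = int r} \<le> 1) sequentially"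
        by (rule always_eventually) (rule allI, rule measure_pmf.prob_le_1)
      show "(\<lambda>n. measure_pmf.prob (M n) {G. cdim (X_GL n G (L n)) \<le> int r} - measure_pmf.prob (M n) (NC n)) \<longlonglongrightarrow> 1"
        using \<open>_ \<longlonglongrightarrow> 1 - 0\<close> by simp
    qed
    then show "aas (\<lambda>n. random_graph (L n) (p1 n)) (\<lambda>n G. cdim (X_GL n G (L n)) = int r)"
      unfolding aas_def M_def by simp
  qed
qed

end
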